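(* There is a constant $c>0$ such that for every sufficiently large $n$ there exists an input $x\in\mathrm{Hex}_n^{-1}( * )$ with $\mathrm{C}_{\bar 0}(\mathrm{Hex}_n,x)\ge c\,n^{1.5}$ and $\mathrm{C}_{\bar 1}(\mathrm{Hex}_n,x)\ge c\,n^{1.5}$.
   Context: Inputs to $\mathrm{Hex}_n\colon\{0,1\}^{n\times n}\to\{0,1,*\}$ are $n\times n$ boolean matrices. Two entries of $[n]\times[n]$ are connected if they are horizontally or vertically adjacent (not diagonally). A $1$-path in $x$ is a sequence of $1$-entries, consecutive ones connected, starting in the topmost row and ending in the bottommost row; a $0$-path is a sequence of $0$-entries, consecutive ones connected, starting in the leftmost column and ending in the rightmost column; the length of a path is its number of entries. $\mathrm{Hex}_n(x)=1$ if $x$ contains a $1$-path of length at most $2n$; $\mathrm{Hex}_n(x)=0$ if $x$ contains a $0$-path of length at most $2n$; $\mathrm{Hex}_n(x)=*$ otherwise. For a partial function $f$: a partial input $\rho$ is consistent with $x$ if it agrees with $x$ on its non-$*$ entries; its size is the number of non-$*$ entries; for $\Sigma\subseteq\{0,1,*\}$, $\rho$ is a $\Sigma$-certificate for $x$ if it is consistent with $x$ and $f(x')\in\Sigma$ for every $x'$ consistent with $\rho$; $\mathrm{C}_\Sigma(f,x)$ is the least size of a $\Sigma$-certificate for $x$; $\bar0=\{1,*\}$ and $\bar1=\{0,*\}$. *)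

theory Defs
  imports Complex_Main
begin

text \<open>Inputs: boolean matrices, given as functions on index pairs (row, column);
  only the entries in the grid {0..<n} x {0..<n} are relevant.
  Row 0 is the topmost row, row n-1 the bottommost; column 0 the leftmost.\<close>

type_synonym matrix = "nat \<times> nat \<Rightarrow> bool"
type_synonym partial_input = "nat \<times> nat \<Rightarrow> bool option"

datatype hexval = HZero | HOne | HStar

definition grid :: "nat \<Rightarrow> (nat \<times> nat) set" where
  "grid n = {0..<n} \<times> {0..<n}"

definition adjacent :: "nat \<times> nat \<Rightarrow> nat \<times> nat \<Rightarrow> bool" where
  "adjacent p q \<longleftrightarrow>
     (fst p = fst q \<and> (snd p = snd q + 1 \<or> snd q = snd p + 1)) \<or>
     (snd p = snd q \<and> (fst p = fst q + 1 \<or> fst q = fst p + 1))"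

definition is_walk :: "nat \<Rightarrow> (nat \<times> nat) list \<Rightarrow> bool" where
  "is_walk n ps \<longleftrightarrow> ps \<noteq> [] \<and> set ps \<subseteq> grid n \<and>
     (\<forall>i. Suc i < length ps \<longrightarrow> adjacent (ps ! i) (ps ! Suc i))"

definition one_path :: "nat \<Rightarrow> matrix \<Rightarrow> (nat \<times> nat) list \<Rightarrow> bool" where
  "one_path n x ps \<longleftrightarrow> is_walk n ps \<and> (\<forall>p\<in>set ps. x p) \<and>
     fst (hd ps) = 0 \<and> fst (last ps) = n - 1"

definition zero_path :: "nat \<Rightarrow> matrix \<Rightarrow> (nat \<times> nat) list \<Rightarrow> bool" where
  "zero_path n x ps \<longleftrightarrow> is_walk n ps \<and> (\<forall>p\<in>set ps. \<not> x p) \<and>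
     snd (hd ps) = 0 \<and> snd (last ps) = n - 1"

definition Hex :: "nat \<Rightarrow> matrix \<Rightarrow> hexval" where
  "Hex n x =
     (if \<exists>ps. one_path n x ps \<and> length ps \<le> 2 * n then HOne
      else if \<exists>ps. zero_path n x ps \<and> length ps \<le> 2 * n then HZero
      else HStar)"

definition consistent :: "nat \<Rightarrow> partial_input \<Rightarrow> matrix \<Rightarrow> bool" where
  "consistent n \<rho> x \<longleftrightarrow> (\<forall>p\<in>grid n. \<forall>b. \<rho> p = Some b \<longrightarrow> x p = b)"

definition psize :: "nat \<Rightarrow> partial_input \<Rightarrow> nat" where
  "psize n \<rho> = card {p \<in> grid n. \<rho> p \<noteq> None}"

definition is_certificate :: "nat \<Rightarrow> hexval set \<Rightarrow> matrix \<Rightarrow> partial_input \<Rightarrow> bool" where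
  "is_certificate n \<Sigma> x \<rho> \<longleftrightarrow> consistent n \<rho> x \<and>
     (\<forall>x'. consistent n \<rho> x' \<longrightarrow> Hex n x' \<in> \<Sigma>)"

definition cert_complexity :: "nat \<Rightarrow> hexval set \<Rightarrow> matrix \<Rightarrow> nat" where
  "cert_complexity n \<Sigma> x = (LEAST k. \<exists>\<rho>. is_certificate n \<Sigma> x \<rho> \<and> psize n \<rho> = k)"

abbreviation not0 :: "hexval set" where "not0 \<equiv> {HOne, HStar}"
abbreviation not1 :: "hexval set" where "not1 \<equiv> {HZero, HStar}"

end

theory Submission
  imports Defs
begin


definition bar :: "nat \<Rightarrow> nat \<Rightarrow> bool" where "bar n i \<longleftrightarrow> odd i \<and> i + 1 < n"
definition ph :: "nat \<Rightarrow> nat \<Rightarrow> nat" where "ph D i = (if i mod 4 = 1 then 0 else D)"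
definition brg :: "nat \<Rightarrow> nat \<Rightarrow> nat \<Rightarrow> nat \<Rightarrow> bool" where
  "brg n D i j \<longleftrightarrow> bar n i \<and> D \<le> j \<and> j + D < n \<and> j mod (2*D) = ph D i"
definition XX :: "nat \<Rightarrow> nat \<Rightarrow> matrix" where
  "XX n D p = (\<not> bar n (fst p) \<or> brg n D (fst p) (snd p))"

lemma is_walk_succ: "is_walk n ps \<longleftrightarrow> ps \<noteq> [] \<and> set ps \<subseteq> grid n \<and> successively adjacent ps"
  unfolding is_walk_def successively_conv_nth by simp

lemma bar_Suc1: "bar n i \<Longrightarrow> \<not> bar n (Suc i)" by (simp add: bar_def)
lemma bar_Suc2: "bar n (Suc i) \<Longrightarrow> \<not> bar n i" by (simp add: bar_def)

lemma ph_diff: "odd i \<Longrightarrow> 0 < D \<Longrightarrow> ph D (i + 2) \<noteq> ph D i"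
  unfolding ph_def by (auto, presburger+)

lemma ph_cases: "ph D i = 0 \<or> ph D i = D" unfolding ph_def by auto

lemma ph_less: "0 < D \<Longrightarrow> ph D i < 2*D" unfolding ph_def by auto

lemma mod_far:
  fixes b j D :: nat
  assumes D: "0 < D" and b: "b mod (2*D) = p" and j: "j mod (2*D) = q"
    and pq: "(p = 0 \<and> q = D) \<or> (p = D \<and> q = 0)"
  shows "\<not> (b < j + D \<and> j < b + D)"
proof
  assume h: "b < j + D \<and> j < b + D"
  have eb: "int b = 2 * int D * int (b div (2*D)) + int p"
    using b by (metis div_mult_mod_eq of_nat_add of_nat_mult mult.commute of_nat_numeral)
  have ej: "int j = 2 * int D * int (j div (2*D)) + int q"
    using j by (metis div_mult_mod_eq of_nat_add of_nat_mult mult.commute of_nat_numeral)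
  obtain k :: int where k: "int j - int b = int D * (2 * k + 1)"
  proof (cases "p = 0")
    case True
    then have "q = D" using pq D by auto
    then show ?thesis using that[of "int (j div (2*D)) - int (b div (2*D))"] eb ej True
      by (simp add: algebra_simps)
  next
    case False
    then have "p = D" "q = 0" using pq by auto
    then show ?thesis using that[of "int (j div (2*D)) - int (b div (2*D)) - 1"] eb ej
      by (simp add: algebra_simps)
  qed
  have "2 * k + 1 \<noteq> 0" by presburger
  then have "\<bar>2 * k + 1\<bar> \<ge> 1" by linarith
  then have "\<bar>int D * (2 * k + 1)\<bar> \<ge> int D" using D
    by (simp add: abs_mult mult_le_cancel_left1)
  with k h show False by linarith
qed

lemma brg_far:
  assumes D: "0 < D" and bi: "brg n D i b" and bj: "brg n D (i+2) j"
  shows "\<not> (b < j + D \<and> j < b + D)"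
proof -
  have "odd i" using bi by (simp add: brg_def bar_def)
  then have "ph D (i+2) \<noteq> ph D i" using ph_diff D by blast
  then show ?thesis using mod_far[OF D, of b "ph D i" j "ph D (i+2)"] bi bj ph_cases[of D i] ph_cases[of D "i+2"]
    by (auto simp: brg_def)
qed

definition TT :: "nat \<Rightarrow> nat \<Rightarrow> int" where "TT D j = \<bar>int (j mod (2*D)) - int D\<bar>"
definition dd :: "nat \<Rightarrow> nat \<Rightarrow> nat \<Rightarrow> int" where
  "dd D i j = (if ph D i = 0 then int D - TT D j else TT D j)"

lemma TT_bounds: "0 < D \<Longrightarrow> 0 \<le> TT D j \<and> TT D j \<le> int D"
proof -
  assume "0 < D"
  then have "j mod (2*D) < 2*D" by simp
  then show ?thesis unfolding TT_def by linarith
qed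

lemma dd_bounds: "0 < D \<Longrightarrow> 0 \<le> dd D i j \<and> dd D i j \<le> int D"
  using TT_bounds[of D j] unfolding dd_def by auto

lemma TT_Suc: "0 < D \<Longrightarrow> \<bar>TT D (Suc j) - TT D j\<bar> \<le> 1"
  unfolding TT_def mod_Suc by (auto split: if_splits)

lemma dd_Suc: "0 < D \<Longrightarrow> \<bar>dd D i (Suc j) - dd D i j\<bar> \<le> 1"
  using TT_Suc[of D j] unfolding dd_def by auto

lemma dd_zero: "0 < D \<Longrightarrow> j mod (2*D) = ph D i \<Longrightarrow> dd D i j = 0"
  unfolding dd_def TT_def using ph_cases[of D i] by auto

lemma dd_full: "0 < D \<Longrightarrow> j mod (2*D) = ph D i \<Longrightarrow> ph D i' \<noteq> ph D i \<Longrightarrow> dd D i' j = int D"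
  unfolding dd_def TT_def using ph_cases[of D i] ph_cases[of D i'] by auto

definition Phi :: "nat \<Rightarrow> nat \<Rightarrow> nat \<times> nat \<Rightarrow> int" where
  "Phi n D p = (let r = fst p; j = snd p in
     if bar n r then int r + int D * int (r div 2)
     else int r + int D * int (r div 2) - (if bar n (r+1) then dd D (r+1) j else int D))"

lemma Phi_step:
  assumes D: "0 < D" and adj: "adjacent p q" and xp: "XX n D p" and xq: "XX n D q"
    and gp: "fst p < n" and gq: "fst q < n"
  shows "Phi n D q \<le> Phi n D p + 1"
proof -
  obtain r j where p: "p = (r, j)" by force
  obtain r' j' where q: "q = (r', j')" by force
  from adj consider (R) "r' = r" "j' = Suc j" | (L) "r' = r" "j = Suc j'"
    | (Dn) "j' = j" "r' = Suc r" | (Up) "j' = j" "r = Suc r'"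
    unfolding adjacent_def p q by auto
  then show ?thesis
  proof cases
    case R
    then show ?thesis using dd_Suc[OF D, of "r+1" j] unfolding p q Phi_def by auto
  next
    case L
    then show ?thesis using dd_Suc[OF D, of "r+1" j'] unfolding p q Phi_def by auto
  next
    case Dn
    show ?thesis
    proof (cases "bar n r")
      case True
      then have nb: "\<not> bar n (Suc r)" using bar_Suc1 by blast
      have br: "brg n D r j" using xp True p by (simp add: XX_def)
      have odd: "odd r" using True by (simp add: bar_def)
      have dv: "Suc r div 2 = r div 2 + 1" using odd by presburger
      have "bar n (r+2) \<Longrightarrow> dd D (r+2) j = int D"
        using dd_full[OF D, of j r "r+2"] br ph_diff[OF odd D] by (auto simp: brg_def)
      then show ?thesis using True nb dv dd_bounds[OF D, of "r+2" j] unfolding p q Dn Phi_def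
        by (auto simp: algebra_simps)
    next
      case False
      show ?thesis
      proof (cases "bar n (Suc r)")
        case True
        have br: "brg n D (Suc r) j" using xq True q Dn by (simp add: XX_def)
        have "even r" using True by (simp add: bar_def)
        then have dv: "Suc r div 2 = r div 2" by presburger
        have "dd D (r+1) j = 0" using dd_zero[OF D] br by (simp add: brg_def)
        then show ?thesis using False True dv unfolding p q Dn Phi_def by auto
      next
        case nb: False
        have "\<not> bar n (Suc (Suc r))"
        proof
          assume h: "bar n (Suc (Suc r))"
          then have "odd r" by (simp add: bar_def)
          then show False using False h by (simp add: bar_def)
        qed
        moreover have "Suc r div 2 = r div 2"
        proof -
          have "Suc r < n" using gq q Dn by simp
          then have "even r" using False by (auto simp: bar_def)
          then show ?thesis by presburger
        qed
        ultimately show ?thesis using False nb unfolding p q Dn Phi_def by auto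
      qed
    qed
  next
    case Up
    show ?thesis
    proof (cases "bar n r'")
      case True
      then have nb: "\<not> bar n r" using bar_Suc1 Up by blast
      have "odd r'" using True by (simp add: bar_def)
      then have dv: "r div 2 = r' div 2 + 1" using Up by presburger
      show ?thesis using True nb dv dd_bounds[OF D, of "r+1" j] D unfolding p q Up Phi_def
        by (auto simp: algebra_simps)
    next
      case False
      show ?thesis
      proof (cases "bar n r")
        case True
        have "even r'" using True Up by (simp add: bar_def)
        then have dv: "r div 2 = r' div 2" using Up by presburger
        show ?thesis using True False dv dd_bounds[OF D, of "r'+1" j] unfolding p q Up Phi_def
          by auto
      next
        case nb: False
        have "r' div 2 \<le> r div 2" using Up by simp
        then have "int D * int (r' div 2) \<le> int D * int (r div 2)" by (simp add: mult_left_mono)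
        then show ?thesis using False nb dd_bounds[OF D, of "r+1" j] Up unfolding p q Up Phi_def
          by auto
      qed
    qed
  qed
qed


lemma succ_pot:
  fixes f :: "'a \<Rightarrow> int"
  shows "successively R ps \<Longrightarrow> ps \<noteq> [] \<Longrightarrow>
    (\<And>p q. p \<in> set ps \<Longrightarrow> q \<in> set ps \<Longrightarrow> R p q \<Longrightarrow> f q \<le> f p + 1) \<Longrightarrow>
    f (last ps) \<le> f (hd ps) + int (length ps - 1)"
proof (induction ps)
  case Nil then show ?case by simp
next
  case (Cons x xs)
  note IH = Cons.IH and pr = Cons.prems
  show ?case
  proof (cases xs)
    case Nil then show ?thesis by simp
  next
    case (Cons y zs)
    have i: "f (last xs) \<le> f (hd xs) + int (length xs - 1)"
      using pr Cons by (intro IH) auto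
    have "f y \<le> f x + 1" using pr Cons by auto
    then show ?thesis using i Cons by simp
  qed
qed

lemma succ_inv:
  shows "successively R ps \<Longrightarrow> ps \<noteq> [] \<Longrightarrow> P (hd ps) \<Longrightarrow>
    (\<And>p q. p \<in> set ps \<Longrightarrow> q \<in> set ps \<Longrightarrow> R p q \<Longrightarrow> P p \<Longrightarrow> P q) \<Longrightarrow> P (last ps)"
proof (induction ps)
  case Nil then show ?case by simp
next
  case (Cons x xs)
  note IH = Cons.IH and pr = Cons.prems
  show ?case
  proof (cases xs)
    case Nil then show ?thesis using pr by simp
  next
    case (Cons y zs)
    have "P y" using pr Cons by auto
    then have "P (last xs)" using pr Cons by (intro IH) auto
    then show ?thesis using Cons by simp
  qed
qed

lemma no_short_one:
  assumes D: "4 \<le> D" and n: "9 \<le> n" and op: "one_path n (XX n D) ps"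
  shows "2 * n < length ps"
proof -
  have D0: "0 < D" using D by simp
  have w: "ps \<noteq> []" "set ps \<subseteq> grid n" "successively adjacent ps"
    using op unfolding one_path_def is_walk_succ by auto
  have ones: "\<forall>p\<in>set ps. XX n D p" using op unfolding one_path_def by auto
  have pot: "Phi n D (last ps) \<le> Phi n D (hd ps) + int (length ps - 1)"
  proof (rule succ_pot[OF w(3) w(1)])
    fix p q assume "p \<in> set ps" "q \<in> set ps" "adjacent p q"
    moreover have "fst p < n" "fst q < n" using \<open>p \<in> set ps\<close> \<open>q \<in> set ps\<close> w(2)
      by (auto simp: grid_def)
    ultimately show "Phi n D q \<le> Phi n D p + 1"
      using Phi_step[OF D0, of p q n] ones by auto
  qed
  have h0: "fst (hd ps) = 0" and hl: "fst (last ps) = n - 1" using op by (auto simp: one_path_def)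
  have "Phi n D (hd ps) \<le> 0"
    using h0 dd_bounds[OF D0, of 1 "snd (hd ps)"] D0 by (auto simp: Phi_def Let_def bar_def)
  moreover have "Phi n D (last ps) = int (n - 1) + int D * int ((n - 1) div 2) - int D"
    using hl n by (auto simp: Phi_def Let_def bar_def)
  ultimately have le: "int (n - 1) + int D * int ((n - 1) div 2) - int D \<le> int (length ps - 1)"
    using pot by linarith
  have m1: "1 \<le> (n - 1) div 2" using n by linarith
  have a: "4 * ((n - 1) div 2 - 1) \<le> D * ((n - 1) div 2 - 1)" using D by simp
  have b: "n + 1 \<le> 4 * ((n - 1) div 2 - 1)" using n by linarith
  have c: "D * ((n - 1) div 2 - 1) + D = D * ((n - 1) div 2)"
    using m1 by (simp add: diff_mult_distrib2)
  have "2 * n + D \<le> n - 1 + D * ((n - 1) div 2)" using a b c n by linarith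
  then have "int (2 * n + D) \<le> int (n - 1 + D * ((n - 1) div 2))" by (simp only: of_nat_le_iff)
  then have "int (2 * n) + int D \<le> int (n - 1) + int D * int ((n - 1) div 2)" by simp
  then show ?thesis using le w(1) by (cases ps) auto
qed

lemma no_zero:
  assumes D0: "0 < D" and n: "3 * D < n" and zp: "zero_path n (XX n D) ps"
  shows False
proof -
  have w: "ps \<noteq> []" "set ps \<subseteq> grid n" "successively adjacent ps"
    using zp unfolding zero_path_def is_walk_succ by auto
  have zs: "\<forall>p\<in>set ps. \<not> XX n D p" using zp unfolding zero_path_def by auto
  define i where "i = fst (hd ps)"
  have bi: "bar n i" using zs w(1) unfolding i_def by (auto simp: XX_def)
  define b0 where "b0 = (if ph D i = 0 then 2 * D else D)"
  have bb: "brg n D i b0"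
    using bi n D0 ph_cases[of D i] unfolding brg_def b0_def by auto
  have "fst (last ps) = i \<and> snd (last ps) < b0"
  proof (rule succ_inv[OF w(3) w(1)])
    show "fst (hd ps) = i \<and> snd (hd ps) < b0" using zp D0 by (auto simp: zero_path_def i_def b0_def)
  next
    fix p q assume pq: "p \<in> set ps" "q \<in> set ps" "adjacent p q" "fst p = i \<and> snd p < b0"
    have bq: "bar n (fst q)" using zs pq(2) by (auto simp: XX_def)
    have "fst q = i"
    proof (rule ccontr)
      assume "fst q \<noteq> i"
      then have "fst q = Suc i \<or> i = Suc (fst q)" using pq(3,4) by (auto simp: adjacent_def)
      then show False using bi bq bar_Suc1 bar_Suc2 by metis
    qed
    moreover have "snd q \<noteq> b0"
    proof
      assume "snd q = b0"
      then have "XX n D q" using bb \<open>fst q = i\<close> by (simp add: XX_def)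
      then show False using zs pq(2) by auto
    qed
    ultimately show "fst q = i \<and> snd q < b0" using pq(3,4) by (auto simp: adjacent_def)
  qed
  moreover have "snd (last ps) = n - 1" using zp by (simp add: zero_path_def)
  moreover have "b0 < n" using bb by (simp add: brg_def)
  ultimately show False by linarith
qed

lemma Hex_XX:
  assumes D: "4 \<le> D" and n: "3 * D < n" "9 \<le> n"
  shows "Hex n (XX n D) = HStar"
proof -
  have "\<not> (\<exists>ps. one_path n (XX n D) ps \<and> length ps \<le> 2 * n)"
    using no_short_one[OF D n(2)] by fastforce
  moreover have "\<not> (\<exists>ps. zero_path n (XX n D) ps \<and> length ps \<le> 2 * n)"
    using no_zero[of D n] D n by auto
  ultimately show ?thesis by (simp add: Hex_def)
qed



lemma one_path_cong: "(\<forall>p\<in>grid n. x p = y p) \<Longrightarrow> one_path n x ps = one_path n y ps"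
  unfolding one_path_def is_walk_def by blast
lemma zero_path_cong: "(\<forall>p\<in>grid n. x p = y p) \<Longrightarrow> zero_path n x ps = zero_path n y ps"
  unfolding zero_path_def is_walk_def by blast
lemma Hex_cong: "(\<forall>p\<in>grid n. x p = y p) \<Longrightarrow> Hex n x = Hex n y"
  unfolding Hex_def using one_path_cong[of n x y] zero_path_cong[of n x y] by simp

lemma cert_exists:
  assumes "Hex n x \<in> S"
  shows "is_certificate n S x (\<lambda>p. Some (x p))"
  unfolding is_certificate_def
proof (intro conjI allI impI)
  show "consistent n (\<lambda>p. Some (x p)) x" by (simp add: consistent_def)
  fix x' assume "consistent n (\<lambda>p. Some (x p)) x'"
  then have "\<forall>p\<in>grid n. x' p = x p" by (simp add: consistent_def)
  then have "Hex n x' = Hex n x" by (rule Hex_cong)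
  then show "Hex n x' \<in> S" using assms by simp
qed

lemma cert_lower:
  assumes "Hex n x \<in> S" and "\<And>\<rho>. is_certificate n S x \<rho> \<Longrightarrow> k \<le> psize n \<rho>"
  shows "k \<le> cert_complexity n S x"
proof -
  let ?P = "\<lambda>k. \<exists>\<rho>. is_certificate n S x \<rho> \<and> psize n \<rho> = k"
  have ex: "?P (psize n (\<lambda>p. Some (x p)))"
    using cert_exists[OF assms(1)] by (intro exI conjI) auto
  have "?P (LEAST k. ?P k)" using ex by (rule LeastI)
  then obtain \<rho> where r: "is_certificate n S x \<rho>" "psize n \<rho> = (LEAST k. ?P k)" by blast
  have "k \<le> psize n \<rho>" using assms(2)[OF r(1)] .
  then show ?thesis using r(2) unfolding cert_complexity_def by simp
qed

lemma succ_hseg: "successively adjacent (map (\<lambda>j. (r, j)) [a..<b])"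
  by (auto simp: successively_conv_nth adjacent_def)

lemma succ_hseg_rev: "successively adjacent (rev (map (\<lambda>j. (r, j)) [a..<b]))"
proof -
  have s: "\<And>p q. adjacent p q \<Longrightarrow> adjacent q p" by (auto simp: adjacent_def)
  show ?thesis using succ_hseg[of r a b] by (simp add: successively_mono s)
qed

lemma concat_upt_Suc: "concat (map f [0..<Suc m]) = concat (map f [0..<m]) @ f m" by simp

lemma last_concat_upt: "f m \<noteq> [] \<Longrightarrow> last (concat (map f [0..<Suc m])) = last (f m)" by simp

lemma hd_concat_upt: "0 < m \<Longrightarrow> f 0 \<noteq> [] \<Longrightarrow> hd (concat (map f [0..<m])) = hd (f 0)"
  by (simp add: upt_conv_Cons)

lemma length_concat_upt: "length (concat (map f [0..<m])) = (\<Sum>i<m. length (f i))"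
  by (induction m) auto

lemma succ_concat:
  assumes "\<forall>i<m. f i \<noteq> []" "\<forall>i<m. successively R (f i)"
    "\<forall>i. Suc i < m \<longrightarrow> R (last (f i)) (hd (f (Suc i)))"
  shows "successively R (concat (map f [0..<m]))"
  using assms
proof (induction m)
  case 0 then show ?case by simp
next
  case (Suc m)
  have IH: "successively R (concat (map f [0..<m]))" using Suc by auto
  show ?case
  proof (cases m)
    case 0 then show ?thesis using Suc by simp
  next
    case (Suc m')
    have "last (concat (map f [0..<m])) = last (f m')"
      using last_concat_upt[of f m'] Suc Suc.prems(1) by (simp del: upt_Suc)
    moreover have "R (last (f m')) (hd (f m))" using Suc.prems(3) Suc by auto
    moreover have "successively R (f m)" "f m \<noteq> []" using Suc.prems by auto
    ultimately show ?thesis using IH by (simp only: concat_upt_Suc successively_append_iff) simp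
  qed
qed



lemma card_fibers_le:
  assumes "finite A" "finite I"
  shows "(\<Sum>i\<in>I. card {p\<in>A. f p = i}) \<le> card A"
proof -
  have "(\<Sum>i\<in>I. card {p\<in>A. f p = i}) = card (\<Union>i\<in>I. {p\<in>A. f p = i})"
    using assms by (intro card_UN_disjoint[symmetric]) auto
  also have "\<dots> \<le> card A" using assms by (intro card_mono) auto
  finally show ?thesis .
qed

lemma cons_XX:
  assumes "consistent n \<rho> x" "p \<in> grid n" "\<rho> p = Some b"
  shows "x p = b"
  using assms unfolding consistent_def by blast

lemma Zside_col:
  assumes D0: "0 < D" and cert: "is_certificate n not1 (XX n D) \<rho>"
    and c1: "3 * D \<le> c" and c2: "c + 3 * D < n"
  shows "n < 4 * D * card {i. i < n \<and> bar n i \<and> \<rho> (i, c) = Some False}"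
proof (rule ccontr)
  assume "\<not> ?thesis"
  then have small: "4 * D * card {i. i < n \<and> bar n i \<and> \<rho> (i, c) = Some False} \<le> n" by simp
  have cons: "consistent n \<rho> (XX n D)" using cert by (simp add: is_certificate_def)
  have okX: "\<rho> p \<noteq> Some False" if "p \<in> grid n" "XX n D p" for p
    using cons_XX[OF cons that(1)] that(2) by auto
  define x' where "x' p = (\<rho> p \<noteq> Some False)" for p
  have "consistent n \<rho> x'" unfolding consistent_def x'_def by auto
  then have hx': "Hex n x' \<noteq> HOne" using cert unfolding is_certificate_def by auto
  define blk where "blk i \<longleftrightarrow> bar n i \<and> \<rho> (i, c) = Some False" for i
  define bz where "bz i = ph D i + 2 * D * ((c - ph D i) div (2 * D))" for i
  define sg where "sg i = (if blk i then rev (map (\<lambda>j. (i - 1, j)) [bz i..<c]) @ [(i, bz i)]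
      @ map (\<lambda>j. (Suc i, j)) [bz i..<c] else [(i, c)])" for i
  define W where "W = concat (map sg [0..<n])"
  have cn: "c < n" using c2 by simp
  have bzf: "bz i \<le> c \<and> c - bz i < 2 * D \<and> bz i mod (2 * D) = ph D i \<and> D \<le> bz i" for i
  proof -
    have pl: "ph D i < 2 * D" "ph D i \<le> D" using ph_less[OF D0] ph_cases[of D i] by auto
    have e: "c - ph D i = 2 * D * ((c - ph D i) div (2 * D)) + (c - ph D i) mod (2 * D)" by simp
    have m: "(c - ph D i) mod (2 * D) < 2 * D" using D0 by simp
    have "c - bz i = (c - ph D i) mod (2 * D)" using e pl c1 unfolding bz_def by linarith
    moreover have "bz i \<le> c" using e pl c1 unfolding bz_def by linarith
    moreover have "bz i mod (2 * D) = ph D i" unfolding bz_def using pl by simp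
    ultimately show ?thesis using m c1 by linarith
  qed
  have blkf: "brg n D i (bz i) \<and> bz i < c \<and> 1 \<le> i \<and> Suc i < n \<and> \<not> bar n (i - 1) \<and> \<not> bar n (Suc i)"
    if "blk i" for i
  proof -
    have bi: "bar n i" using that by (simp add: blk_def)
    have br: "brg n D i (bz i)" using bzf[of i] bi c2 by (simp add: brg_def)
    have "bz i \<noteq> c"
    proof
      assume "bz i = c"
      then have "brg n D i c" using br by simp
      then have "XX n D (i, c)" by (simp add: XX_def)
      moreover have "(i, c) \<in> grid n" using bi cn by (simp add: grid_def bar_def)
      ultimately show False using okX that by (simp add: blk_def)
    qed
    moreover have "1 \<le> i" using bi by (simp add: bar_def odd_pos Suc_leI)
    moreover have "Suc i < n" using bi by (auto simp: bar_def)
    moreover have "\<not> bar n (i - 1)" using bi bar_Suc2[of n "i - 1"] \<open>1 \<le> i\<close> by simp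
    ultimately show ?thesis using br bzf[of i] bar_Suc1[OF bi] by auto
  qed
  have sg_ne: "sg i \<noteq> []" for i by (simp add: sg_def)
  have hd_sg: "hd (sg i) = (if blk i then (i - 1, c - 1) else (i, c))" for i
  proof (cases "blk i")
    case True
    then have "bz i < c" using blkf by blast
    then show ?thesis using True by (simp add: sg_def hd_append hd_rev last_map)
  qed (simp add: sg_def)
  have last_sg: "last (sg i) = (if blk i then (Suc i, c - 1) else (i, c))" for i
  proof (cases "blk i")
    case True
    then have "bz i < c" using blkf by blast
    then show ?thesis using True by (simp add: sg_def last_map)
  qed (simp add: sg_def)
  have succ_sg: "successively adjacent (sg i)" for i
  proof (cases "blk i")
    case True
    note f = blkf[OF True]
    have ne: "[bz i..<c] \<noteq> []" using f by simp
    have l1: "last (rev (map (\<lambda>j. (i - 1, j)) [bz i..<c])) = (i - 1, bz i)"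
      using ne f by (simp add: last_rev hd_map)
    have h2: "hd (map (\<lambda>j. (Suc i, j)) [bz i..<c]) = (Suc i, bz i)"
      using ne f by (simp add: hd_map)
    have a1: "adjacent (i - 1, bz i) (i, bz i)" using f by (auto simp: adjacent_def)
    have a2: "adjacent (i, bz i) (Suc i, bz i)" by (auto simp: adjacent_def)
    show ?thesis using True succ_hseg_rev[of "i - 1" "bz i" c] succ_hseg[of "Suc i" "bz i" c] l1 h2 a1 a2 ne
      unfolding sg_def by (simp add: successively_append_iff successively_Cons)
  qed (simp add: sg_def)
  have junc: "adjacent (last (sg i)) (hd (sg (Suc i)))" if "Suc i < n" for i
  proof -
    have "\<not> (blk i \<and> blk (Suc i))" using bar_Suc1 by (auto simp: blk_def)
    moreover have "0 < c" using c1 D0 by simp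
    ultimately show ?thesis unfolding last_sg hd_sg by (auto simp: adjacent_def)
  qed
  have wsucc: "successively adjacent W"
    unfolding W_def using sg_ne succ_sg junc by (intro succ_concat) auto
  have cells: "p \<in> grid n \<and> x' p" if "i < n" "p \<in> set (sg i)" for i p
  proof (cases "blk i")
    case True
    note f = blkf[OF True]
    have "p \<in> set (map (\<lambda>j. (i - 1, j)) [bz i..<c]) \<or> p = (i, bz i) \<or> p \<in> set (map (\<lambda>j. (Suc i, j)) [bz i..<c])"
      using that(2) True unfolding sg_def by auto
    then show ?thesis
    proof (elim disjE)
      assume "p \<in> set (map (\<lambda>j. (i - 1, j)) [bz i..<c])"
      then obtain j where "p = (i - 1, j)" "j < c" by auto
      moreover have "(i - 1, j) \<in> grid n" using \<open>j < c\<close> cn that(1) by (simp add: grid_def)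
      moreover have "XX n D (i - 1, j)" using f by (simp add: XX_def)
      ultimately show ?thesis using okX unfolding x'_def by auto
    next
      assume "p = (i, bz i)"
      moreover have "(i, bz i) \<in> grid n" using f that(1) cn by (simp add: grid_def)
      moreover have "XX n D (i, bz i)" using f by (simp add: XX_def)
      ultimately show ?thesis using okX unfolding x'_def by auto
    next
      assume "p \<in> set (map (\<lambda>j. (Suc i, j)) [bz i..<c])"
      then obtain j where "p = (Suc i, j)" "j < c" by auto
      moreover have "(Suc i, j) \<in> grid n" using \<open>j < c\<close> cn f by (simp add: grid_def)
      moreover have "XX n D (Suc i, j)" using f by (simp add: XX_def)
      ultimately show ?thesis using okX unfolding x'_def by auto
    qed
  next
    case False
    then have p: "p = (i, c)" using that(2) by (simp add: sg_def)
    have g: "(i, c) \<in> grid n" using that(1) cn by (simp add: grid_def)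
    show ?thesis
    proof (cases "bar n i")
      case True then show ?thesis using False p g unfolding x'_def blk_def by auto
    next
      case nb: False
      then have "XX n D (i, c)" by (simp add: XX_def)
      then show ?thesis using okX g p unfolding x'_def by auto
    qed
  qed
  have n0: "0 < n" using c2 by simp
  have hdW: "hd W = (0, c)"
    unfolding W_def using hd_concat_upt[of n sg, OF n0 sg_ne] hd_sg[of 0] by (simp add: blk_def bar_def)
  have lastW: "last W = (n - 1, c)"
  proof -
    have "W = concat (map sg [0..<Suc (n - 1)])" using n0 unfolding W_def by simp
    then have "last W = last (sg (n - 1))" using last_concat_upt[of sg "n - 1", OF sg_ne] by simp
    then show ?thesis using last_sg[of "n - 1"] n0 by (simp add: blk_def bar_def)
  qed
  have Wne: "W \<noteq> []" using hdW n0 unfolding W_def by (cases n) (auto simp: sg_ne)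
  have Wset: "\<forall>p\<in>set W. p \<in> grid n \<and> x' p" using cells unfolding W_def by auto
  have op: "one_path n x' W"
    unfolding one_path_def is_walk_succ using Wne Wset wsucc hdW lastW by auto
  have len_sg: "length (sg i) \<le> 1 + (if blk i then 4 * D else 0)" for i
  proof (cases "blk i")
    case True
    then have "c - bz i < 2 * D" using bzf by blast
    then show ?thesis using True unfolding sg_def by simp
  qed (simp add: sg_def)
  have "length W = (\<Sum>i<n. length (sg i))" unfolding W_def by (rule length_concat_upt)
  also have "\<dots> \<le> (\<Sum>i<n. 1 + (if blk i then 4 * D else 0))" by (intro sum_mono len_sg)
  also have "\<dots> = n + (\<Sum>i<n. (if blk i then 4 * D else 0))" by (simp only: sum.distrib) simp
  also have "(\<Sum>i<n. (if blk i then 4 * D else 0)) = (\<Sum>i\<in>{i\<in>{..<n}. blk i}. 4 * D)"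
    by (rule sum.inter_filter[OF finite_lessThan, symmetric])
  also have "\<dots> = 4 * D * card {i. i < n \<and> bar n i \<and> \<rho> (i, c) = Some False}"
  proof -
    have "{i\<in>{..<n}. blk i} = {i. i < n \<and> bar n i \<and> \<rho> (i, c) = Some False}"
      by (auto simp: blk_def)
    then show ?thesis by simp
  qed
  finally have "length W \<le> 2 * n" using small by linarith
  then have "Hex n x' = HOne" using op unfolding Hex_def by auto
  then show False using hx' by simp
qed


lemma finite_grid: "finite (grid n)" by (simp add: grid_def)

lemma Zside:
  assumes D0: "0 < D" and cert: "is_certificate n not1 (XX n D) \<rho>" and n6: "6 * D \<le> n"
  shows "(n - 6 * D) * n \<le> 4 * D * psize n \<rho>"
proof -
  define S0 where "S0 = {p\<in>grid n. \<rho> p = Some False}"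
  have fS: "finite S0" unfolding S0_def using finite_grid by simp
  have cS: "card S0 \<le> psize n \<rho>" unfolding psize_def S0_def
    using finite_grid by (intro card_mono) auto
  define C where "C = {3 * D..<n - 3 * D}"
  have each: "n + 1 \<le> 4 * D * card {p\<in>S0. snd p = c}" if "c \<in> C" for c
  proof -
    have c: "3 * D \<le> c" "c + 3 * D < n" using that n6 unfolding C_def by auto
    let ?K = "{i. i < n \<and> bar n i \<and> \<rho> (i, c) = Some False}"
    have "card ?K = card ((\<lambda>i. (i, c)) ` ?K)" by (simp add: card_image inj_on_def)
    also have "\<dots> \<le> card {p\<in>S0. snd p = c}"
      using fS c(2) by (intro card_mono) (auto simp: S0_def grid_def)
    finally have "card ?K \<le> card {p\<in>S0. snd p = c}" .
    moreover have "n < 4 * D * card ?K" using Zside_col[OF D0 cert c] .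
    ultimately show ?thesis
    proof -
      assume a: "card ?K \<le> card {p\<in>S0. snd p = c}" and b: "n < 4 * D * card ?K"
      have "4 * D * card ?K \<le> 4 * D * card {p\<in>S0. snd p = c}" using a by (rule mult_le_mono2)
      then show ?thesis using b by linarith
    qed
  qed
  have "(\<Sum>c\<in>C. n + 1) \<le> (\<Sum>c\<in>C. 4 * D * card {p\<in>S0. snd p = c})"
    by (intro sum_mono each)
  also have "\<dots> = 4 * D * (\<Sum>c\<in>C. card {p\<in>S0. snd p = c})" by (simp add: sum_distrib_left)
  also have "\<dots> \<le> 4 * D * card S0"
    using card_fibers_le[OF fS, of C snd] unfolding C_def by simp
  finally have "card C * (n + 1) \<le> 4 * D * card S0" by simp
  moreover have "card C = n - 6 * D" unfolding C_def by simp
  ultimately have "(n - 6 * D) * n \<le> 4 * D * card S0"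
    by (metis le_trans mult_le_mono2 le_add1)
  then show ?thesis using cS by (meson le_trans mult_le_mono2)
qed



lemma card_brg: assumes D0: "0 < D" shows "card {b. brg n D i b} \<le> n div (2 * D) + 1"
proof -
  have "{b. brg n D i b} \<subseteq> (\<lambda>q. 2 * D * q + ph D i) ` {..n div (2 * D)}"
  proof
    fix b assume "b \<in> {b. brg n D i b}"
    then have b: "b mod (2 * D) = ph D i" "b < n" by (auto simp: brg_def)
    have "b = 2 * D * (b div (2 * D)) + ph D i" using b(1) by (metis div_mult_mod_eq mult.commute)
    moreover have "b div (2 * D) \<le> n div (2 * D)" using b(2) by (simp add: div_le_mono)
    ultimately show "b \<in> (\<lambda>q. 2 * D * q + ph D i) ` {..n div (2 * D)}" by blast
  qed
  then have "card {b. brg n D i b} \<le> card ((\<lambda>q. 2 * D * q + ph D i) ` {..n div (2 * D)})"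
    by (intro card_mono) auto
  also have "\<dots> \<le> card {..n div (2 * D)}" by (rule card_image_le) simp
  finally show ?thesis by simp
qed

lemma Oside_row:
  assumes D4: "4 \<le> D" and n9: "9 \<le> n" and cert: "is_certificate n not0 (XX n D) \<rho>"
    and i: "odd i" "3 \<le> i" "i + 1 < n"
  shows "\<exists>b. brg n D i b \<and> ((\<forall>j. b < j + D \<and> j < b \<longrightarrow> \<rho> (i - 1, j) = Some True) \<or>
                             (\<forall>j. b < j \<and> j < b + D \<longrightarrow> \<rho> (i - 1, j) = Some True))"
proof (rule ccontr)
  assume "\<not> ?thesis"
  then have H: "\<forall>b. \<exists>c. brg n D i b \<longrightarrow> (b < c + D \<and> c < b \<and> \<rho> (i - 1, c) \<noteq> Some True)"
    "\<forall>b. \<exists>c. brg n D i b \<longrightarrow> (b < c \<and> c < b + D \<and> \<rho> (i - 1, c) \<noteq> Some True)"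
    by blast+
  from H(1) obtain c1 where c1: "\<And>b. brg n D i b \<Longrightarrow> b < c1 b + D \<and> c1 b < b \<and> \<rho> (i - 1, c1 b) \<noteq> Some True"
    by metis
  from H(2) obtain c2 where c2: "\<And>b. brg n D i b \<Longrightarrow> b < c2 b \<and> c2 b < b + D \<and> \<rho> (i - 1, c2 b) \<noteq> Some True"
    by metis
  have D0: "0 < D" using D4 by simp
  have cons: "consistent n \<rho> (XX n D)" using cert by (simp add: is_certificate_def)
  have okX: "\<rho> p \<noteq> Some True" if "p \<in> grid n" "\<not> XX n D p" for p
    using cons_XX[OF cons that(1)] that(2) by auto
  define x' where "x' p = (\<rho> p = Some True)" for p
  have "consistent n \<rho> x'" unfolding consistent_def x'_def by auto
  then have hx': "Hex n x' \<noteq> HZero" using cert unfolding is_certificate_def by auto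
  have noone: "\<not> (\<exists>ps. one_path n x' ps \<and> length ps \<le> 2 * n)"
  proof
    assume "\<exists>ps. one_path n x' ps \<and> length ps \<le> 2 * n"
    then obtain ps where ps: "one_path n x' ps" "length ps \<le> 2 * n" by blast
    have "one_path n (XX n D) ps"
      using ps(1) cons_XX[OF cons] unfolding one_path_def is_walk_def x'_def by blast
    then show False using no_short_one[OF D4 n9] ps(2) by fastforce
  qed
  have bi: "bar n i" using i by (simp add: bar_def)
  have bi2: "bar n (i - 2)" using i by (auto simp: bar_def)
  define up where "up j \<longleftrightarrow> (\<exists>b. brg n D i b \<and> c1 b \<le> j \<and> j \<le> c2 b)" for j
  define st where "st j \<longleftrightarrow> up j \<and> \<not> up (j - 1)" for j
  define en where "en j \<longleftrightarrow> up j \<and> \<not> up (Suc j)" for j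
  define sg where "sg j = (if st j then [(i, j), (i - 1, j)] else []) @ [(if up j then i - 2 else i, j)]
      @ (if en j then [(i - 1, j), (i, j)] else [])" for j
  define W where "W = concat (map sg [0..<n])"
  have F2: "\<not> XX n D (i - 2, j) \<and> j < n" if hu: "up j" for j
  proof -
    obtain b where b: "brg n D i b" "c1 b \<le> j" "j \<le> c2 b" using hu by (auto simp: up_def)
    have "b < j + D" "j < b + D" using c1[OF b(1)] c2[OF b(1)] b by auto
    moreover have "(i - 2) + 2 = i" using i by simp
    then have "brg n D ((i - 2) + 2) b" using b(1) by simp
    ultimately have "\<not> brg n D (i - 2) j" using brg_far[OF D0, of n "i - 2" j b] by auto
    moreover have "j < n" using b c2[OF b(1)] by (auto simp: brg_def)
    ultimately show ?thesis using bi2 by (simp add: XX_def)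
  qed
  have F3: "\<not> up 0" "\<not> up (n - 1)"
  proof -
    show "\<not> up 0"
    proof
      assume "up 0"
      then obtain b where b: "brg n D i b" "c1 b \<le> 0" by (auto simp: up_def)
      then show False using c1[OF b(1)] by (auto simp: brg_def)
    qed
    show "\<not> up (n - 1)"
    proof
      assume "up (n - 1)"
      then obtain b where b: "brg n D i b" "n - 1 \<le> c2 b" by (auto simp: up_def)
      then show False using c2[OF b(1)] by (auto simp: brg_def)
    qed
  qed
  have F4: "up (j - 1) \<and> up j \<and> up (Suc j)" if hb: "brg n D i j" for j
  proof -
    have a: "c1 j < j" "j < c2 j" using c1[OF hb] c2[OF hb] by auto
    then have "c1 j \<le> j - 1" "j - 1 \<le> c2 j" "c1 j \<le> j" "j \<le> c2 j" "c1 j \<le> Suc j" "Suc j \<le> c2 j"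
      by auto
    then show ?thesis unfolding up_def using hb by blast
  qed
  have F5: "\<exists>b. brg n D i b \<and> (j = c1 b \<or> j = c2 b)" if hse: "st j \<or> en j" for j
  proof -
    obtain b where b: "brg n D i b" "c1 b \<le> j" "j \<le> c2 b" using hse by (auto simp: up_def st_def en_def)
    have "j = c1 b \<or> j = c2 b"
    proof (rule ccontr)
      assume "\<not> (j = c1 b \<or> j = c2 b)"
      then have "up (j - 1)" "up (Suc j)" using b unfolding up_def by (auto intro!: exI[of _ b])
      then show False using hse by (auto simp: st_def en_def)
    qed
    then show ?thesis using b by blast
  qed
  have cells: "p \<in> grid n \<and> \<not> x' p" if "j < n" "p \<in> set (sg j)" for j p
  proof -
    have "p = (i, j) \<and> (st j \<or> en j \<or> \<not> up j) \<or> p = (i - 1, j) \<and> (st j \<or> en j) \<or> p = (i - 2, j) \<and> up j"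
      using that(2) unfolding sg_def by (auto split: if_splits)
    then consider (A) "p = (i, j)" "st j \<or> en j \<or> \<not> up j" | (B) "p = (i - 1, j)" "st j \<or> en j"
      | (C) "p = (i - 2, j)" "up j" by blast
    then show ?thesis
    proof cases
      case A
      note p = A(1) and h = A(2)
      have "\<not> brg n D i j" using F4 h by (auto simp: st_def en_def)
      then have "\<not> XX n D (i, j)" using bi by (simp add: XX_def)
      moreover have "(i, j) \<in> grid n" using that(1) i by (simp add: grid_def)
      ultimately show ?thesis using okX p unfolding x'_def by auto
    next
      case B
      note p = B(1) and h = B(2)
      obtain b where "brg n D i b" "j = c1 b \<or> j = c2 b" using F5[OF h] by blast
      then have "\<rho> (i - 1, j) \<noteq> Some True" using c1 c2 by blast
      moreover have "(i - 1, j) \<in> grid n" using that(1) i by (simp add: grid_def)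
      ultimately show ?thesis using p unfolding x'_def by auto
    next
      case C
      note p = C(1) and h = C(2)
      have g: "(i - 2, j) \<in> grid n" using that(1) i by (simp add: grid_def)
      show ?thesis using okX[OF g] F2[OF h] p g unfolding x'_def by auto
    qed
  qed
  have sg_ne: "sg j \<noteq> []" for j by (simp add: sg_def)
  have hd_sg: "hd (sg j) = (if st j then (i, j) else if up j then (i - 2, j) else (i, j))" for j
    by (simp add: sg_def)
  have last_sg: "last (sg j) = (if en j then (i, j) else if up j then (i - 2, j) else (i, j))" for j
    by (simp add: sg_def)
  have succ_sg: "successively adjacent (sg j)" for j
    using i unfolding sg_def st_def en_def
    by (auto simp: successively_append_iff successively_Cons adjacent_def)
  have junc: "adjacent (last (sg j)) (hd (sg (Suc j)))" for j
    unfolding last_sg hd_sg st_def en_def by (auto simp: adjacent_def)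
  have wsucc: "successively adjacent W"
    unfolding W_def using sg_ne succ_sg junc by (intro succ_concat) auto
  have n0: "0 < n" using n9 by simp
  have hdW: "hd W = (i, 0)"
    unfolding W_def using hd_concat_upt[of n sg, OF n0 sg_ne] hd_sg[of 0] F3 by (simp add: st_def)
  have lastW: "last W = (i, n - 1)"
  proof -
    have "W = concat (map sg [0..<Suc (n - 1)])" using n0 unfolding W_def by simp
    then have "last W = last (sg (n - 1))" using last_concat_upt[of sg "n - 1", OF sg_ne] by simp
    then show ?thesis using last_sg[of "n - 1"] F3 by (simp add: en_def)
  qed
  have Wne: "W \<noteq> []" using n0 unfolding W_def by (cases n) (auto simp: sg_ne)
  have Wset: "\<forall>p\<in>set W. p \<in> grid n \<and> \<not> x' p" using cells unfolding W_def by auto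
  have zp: "zero_path n x' W"
    unfolding zero_path_def is_walk_succ using Wne Wset wsucc hdW lastW by auto
  define B where "B = {b. brg n D i b}"
  have fB: "finite B" unfolding B_def by (rule finite_subset[of _ "{..<n}"]) (auto simp: brg_def)
  have cst: "card {j\<in>{..<n}. st j} \<le> card B"
  proof -
    have "{j\<in>{..<n}. st j} \<subseteq> c1 ` B"
    proof
      fix j assume "j \<in> {j\<in>{..<n}. st j}"
      then have "st j" by simp
      then obtain b where b: "brg n D i b" "j = c1 b \<or> j = c2 b" using F5 by blast
      have "j \<noteq> c2 b \<or> j = c1 b"
      proof (rule ccontr)
        assume "\<not> (j \<noteq> c2 b \<or> j = c1 b)"
        then have "j = c2 b" "j \<noteq> c1 b" by auto
        then have "up (j - 1)" using c1[OF b(1)] c2[OF b(1)] b(1) unfolding up_def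
          by (intro exI[of _ b]) auto
        then show False using \<open>st j\<close> by (simp add: st_def)
      qed
      then show "j \<in> c1 ` B" using b unfolding B_def by auto
    qed
    then have "card {j\<in>{..<n}. st j} \<le> card (c1 ` B)" using fB by (intro card_mono) auto
    also have "\<dots> \<le> card B" by (rule card_image_le[OF fB])
    finally show ?thesis .
  qed
  have cen: "card {j\<in>{..<n}. en j} \<le> card B"
  proof -
    have "{j\<in>{..<n}. en j} \<subseteq> c2 ` B"
    proof
      fix j assume "j \<in> {j\<in>{..<n}. en j}"
      then have "en j" by simp
      then obtain b where b: "brg n D i b" "j = c1 b \<or> j = c2 b" using F5 by blast
      have "j \<noteq> c1 b \<or> j = c2 b"
      proof (rule ccontr)
        assume "\<not> (j \<noteq> c1 b \<or> j = c2 b)"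
        then have "j = c1 b" "j \<noteq> c2 b" by auto
        then have "up (Suc j)" using c1[OF b(1)] c2[OF b(1)] b(1) unfolding up_def
          by (intro exI[of _ b]) auto
        then show False using \<open>en j\<close> by (simp add: en_def)
      qed
      then show "j \<in> c2 ` B" using b unfolding B_def by auto
    qed
    then have "card {j\<in>{..<n}. en j} \<le> card (c2 ` B)" using fB by (intro card_mono) auto
    also have "\<dots> \<le> card B" by (rule card_image_le[OF fB])
    finally show ?thesis .
  qed
  have len_sg: "length (sg j) = 1 + (if st j then 2 else 0) + (if en j then 2 else 0)" for j
    by (simp add: sg_def)
  have "length W = (\<Sum>j<n. length (sg j))" unfolding W_def by (rule length_concat_upt)
  also have "\<dots> = (\<Sum>j<n. 1) + (\<Sum>j<n. (if st j then 2 else 0)) + (\<Sum>j<n. (if en j then 2 else 0))"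
    unfolding len_sg by (simp only: sum.distrib)
  also have "(\<Sum>j<n. (if st j then 2 else 0)) = (\<Sum>j\<in>{j\<in>{..<n}. st j}. (2::nat))"
    by (rule sum.inter_filter[OF finite_lessThan, symmetric])
  also have "(\<Sum>j<n. (if en j then 2 else 0)) = (\<Sum>j\<in>{j\<in>{..<n}. en j}. (2::nat))"
    by (rule sum.inter_filter[OF finite_lessThan, symmetric])
  finally have lw: "length W \<le> n + 2 * card B + 2 * card B" using cst cen by simp
  have cB: "card B \<le> n div (2 * D) + 1" unfolding B_def by (rule card_brg[OF D0])
  have "n div (2 * D) \<le> n div 8" using D4 by (intro div_le_mono2) auto
  moreover have "8 * (n div 8) \<le> n" by simp
  ultimately have "length W \<le> 2 * n" using lw cB n9 by linarith
  then have "Hex n x' = HZero" using zp noone unfolding Hex_def by auto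
  then show False using hx' by simp
qed



lemma Oside:
  assumes D4: "4 \<le> D" and n9: "9 \<le> n" and cert: "is_certificate n not0 (XX n D) \<rho>"
  shows "((n - 5) div 2) * (D - 1) \<le> psize n \<rho>"
proof -
  define S1 where "S1 = {p\<in>grid n. \<rho> p = Some True}"
  have fS: "finite S1" unfolding S1_def using finite_grid by simp
  have cS: "card S1 \<le> psize n \<rho>" unfolding psize_def S1_def
    using finite_grid by (intro card_mono) auto
  define I where "I = {i. odd i \<and> 3 \<le> i \<and> i + 1 < n}"
  have fI: "finite I" unfolding I_def by (rule finite_subset[of _ "{..<n}"]) auto
  have each: "D - 1 \<le> card {p\<in>S1. fst p = i - 1}" if "i \<in> I" for i
  proof -
    have i: "odd i" "3 \<le> i" "i + 1 < n" using that by (auto simp: I_def)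
    obtain b where b: "brg n D i b" and
      h: "(\<forall>j. b < j + D \<and> j < b \<longrightarrow> \<rho> (i - 1, j) = Some True) \<or>
          (\<forall>j. b < j \<and> j < b + D \<longrightarrow> \<rho> (i - 1, j) = Some True)"
      using Oside_row[OF D4 n9 cert i] by blast
    have bb: "D \<le> b" "b + D < n" using b by (auto simp: brg_def)
    from h show ?thesis
    proof
      assume L: "\<forall>j. b < j + D \<and> j < b \<longrightarrow> \<rho> (i - 1, j) = Some True"
      have "(\<lambda>j. (i - 1, j)) ` {b + 1 - D..<b} \<subseteq> {p\<in>S1. fst p = i - 1}"
        using L bb i unfolding S1_def grid_def by auto
      then have "card ((\<lambda>j. (i - 1, j)) ` {b + 1 - D..<b}) \<le> card {p\<in>S1. fst p = i - 1}"
        using fS by (intro card_mono) auto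
      moreover have "card ((\<lambda>j. (i - 1, j)) ` {b + 1 - D..<b}) = D - 1"
        using bb by (simp add: card_image inj_on_def)
      ultimately show ?thesis by simp
    next
      assume R: "\<forall>j. b < j \<and> j < b + D \<longrightarrow> \<rho> (i - 1, j) = Some True"
      have "(\<lambda>j. (i - 1, j)) ` {b + 1..<b + D} \<subseteq> {p\<in>S1. fst p = i - 1}"
        using R bb i unfolding S1_def grid_def by auto
      then have "card ((\<lambda>j. (i - 1, j)) ` {b + 1..<b + D}) \<le> card {p\<in>S1. fst p = i - 1}"
        using fS by (intro card_mono) auto
      moreover have "card ((\<lambda>j. (i - 1, j)) ` {b + 1..<b + D}) = D - 1"
        using bb by (simp add: card_image inj_on_def)
      ultimately show ?thesis by simp
    qed
  qed
  have inj: "inj_on (\<lambda>i. i - 1) I" unfolding I_def inj_on_def by auto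
  have "card I * (D - 1) = (\<Sum>i\<in>I. D - 1)" by simp
  also have "\<dots> \<le> (\<Sum>i\<in>I. card {p\<in>S1. fst p = i - 1})" by (intro sum_mono each)
  also have "\<dots> = (\<Sum>r\<in>(\<lambda>i. i - 1) ` I. card {p\<in>S1. fst p = r})"
    using sum.reindex[OF inj, of "\<lambda>r. card {p\<in>S1. fst p = r}"] by simp
  also have "\<dots> \<le> card S1" using card_fibers_le[OF fS, of "(\<lambda>i. i - 1) ` I" fst] fI by simp
  finally have cI: "card I * (D - 1) \<le> card S1" .
  have "(\<lambda>q. 2 * q + 3) ` {..<(n - 5) div 2} \<subseteq> I" unfolding I_def by auto
  then have "card ((\<lambda>q. 2 * q + 3) ` {..<(n - 5) div 2}) \<le> card I" using fI by (intro card_mono)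
  moreover have "card ((\<lambda>q. 2 * q + 3) ` {..<(n - 5) div 2}) = (n - 5) div 2"
    by (simp add: card_image inj_on_def)
  ultimately have "(n - 5) div 2 \<le> card I" by simp
  then have "((n - 5) div 2) * (D - 1) \<le> card I * (D - 1)" by (rule mult_le_mono1)
  then show ?thesis using cI cS by linarith
qed

lemma powr15: "0 \<le> (x::real) \<Longrightarrow> x powr 1.5 = x * sqrt x"
proof -
  assume x: "0 \<le> x"
  show ?thesis
  proof (cases "x = 0")
    case True then show ?thesis by simp
  next
    case False
    then have "x powr 1.5 = x powr (1 + 1/2)" by simp
    also have "\<dots> = x powr 1 * x powr (1/2)" by (rule powr_add)
    also have "\<dots> = x * sqrt x" using False x by (simp add: powr_half_sqrt)
    finally show ?thesis .
  qed
qed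


lemma cert_achieved:
  assumes "Hex n x \<in> S"
  shows "\<exists>\<rho>. is_certificate n S x \<rho> \<and> psize n \<rho> = cert_complexity n S x"
proof -
  let ?P = "\<lambda>k. \<exists>\<rho>. is_certificate n S x \<rho> \<and> psize n \<rho> = k"
  have ex: "?P (psize n (\<lambda>p. Some (x p)))"
    using cert_exists[OF assms] by (intro exI conjI) auto
  have "?P (LEAST k. ?P k)" using ex by (rule LeastI)
  then show ?thesis unfolding cert_complexity_def by blast
qed

theorem lemma4p1:
  shows "\<exists>c::real. c > 0 \<and> (\<exists>N. \<forall>n\<ge>N. \<exists>x. Hex n x = HStar \<and>
           real (cert_complexity n not0 x) \<ge> c * real n powr 1.5 \<and>
           real (cert_complexity n not1 x) \<ge> c * real n powr 1.5)"
proof -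
  have main: "\<exists>x. Hex n x = HStar \<and> 1/8 * real n powr 1.5 \<le> real (cert_complexity n not0 x) \<and>
           1/8 * real n powr 1.5 \<le> real (cert_complexity n not1 x)" if n: "10000 \<le> n" for n
  proof -
  define s where "s = sqrt (real n)"
  define D where "D = nat \<lfloor>s\<rfloor>"
  have s0: "0 \<le> s" unfolding s_def by simp
  have ss: "s * s = real n" unfolding s_def by simp
  have "(100::real)\<^sup>2 \<le> real n" using n by simp
  then have s100: "100 \<le> s" unfolding s_def by (rule real_le_rsqrt)
  have rD: "real D = of_int \<lfloor>s\<rfloor>" unfolding D_def using s0 by simp
  have Ds: "real D \<le> s" "s < real D + 1" using rD by linarith+
  have D4: "4 \<le> D" using Ds s100 by linarith
  have D0: "0 < D" using D4 by simp
  have "6 * s \<le> s * s" using mult_right_mono[of 6 s s] s100 s0 by simp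
  then have "6 * real D \<le> s * s" using Ds by linarith
  then have n6: "6 * D \<le> n" using ss by (metis of_nat_le_iff of_nat_mult of_nat_numeral)
  have n3: "3 * D < n" using n6 D0 by linarith
  have n9: "9 \<le> n" using n by simp
  define x where "x = XX n D"
  have hx: "Hex n x = HStar" unfolding x_def by (rule Hex_XX[OF D4 n3 n9])
  show "\<exists>x. Hex n x = HStar \<and> 1/8 * real n powr 1.5 \<le> real (cert_complexity n not0 x) \<and>
           1/8 * real n powr 1.5 \<le> real (cert_complexity n not1 x)"
  proof (rule exI[of _ x], intro conjI)
    show "Hex n x = HStar" by (rule hx)
    have pw: "real n powr 1.5 = real n * s" unfolding s_def by (rule powr15) simp
    obtain \<rho>0 where r0: "is_certificate n not0 x \<rho>0" "psize n \<rho>0 = cert_complexity n not0 x"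
      using cert_achieved[of n x not0] hx by auto
    have c0: "((n - 5) div 2) * (D - 1) \<le> cert_complexity n not0 x"
      using Oside[OF D4 n9, of \<rho>0] r0 unfolding x_def by simp
    have a1: "real ((n - 5) div 2) \<ge> (real n - 6) / 2"
    proof -
      have "n - 6 \<le> 2 * ((n - 5) div 2)" by linarith
      then have "real (n - 6) \<le> 2 * real ((n - 5) div 2)" by (metis of_nat_le_iff of_nat_mult of_nat_numeral)
      then show ?thesis using n by (simp add: of_nat_diff)
    qed
    have a2: "real (D - 1) \<ge> s - 2" using Ds D0 by (simp add: of_nat_diff)
    have "real n / 4 \<le> (real n - 6) / 2" using n by simp
    moreover have "s / 2 \<le> s - 2" using s100 by simp
    ultimately have "(real n / 4) * (s / 2) \<le> ((real n - 6) / 2) * (s - 2)"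
      using s0 n by (intro mult_mono) auto
    also have "\<dots> \<le> real ((n - 5) div 2) * real (D - 1)"
      using a1 a2 n s100 by (intro mult_mono) auto
    also have "\<dots> \<le> real (cert_complexity n not0 x)"
      using c0 by (metis of_nat_le_iff of_nat_mult)
    finally show "1/8 * real n powr 1.5 \<le> real (cert_complexity n not0 x)"
      unfolding pw by simp
    obtain \<rho>1 where r1: "is_certificate n not1 x \<rho>1" "psize n \<rho>1 = cert_complexity n not1 x"
      using cert_achieved[of n x not1] hx by auto
    have c1: "(n - 6 * D) * n \<le> 4 * D * cert_complexity n not1 x"
      using Zside[OF D0 _ n6, of \<rho>1] r1 unfolding x_def by simp
    then have c1r: "(real n - 6 * real D) * real n \<le> 4 * real D * real (cert_complexity n not1 x)"
      using n6 by (metis (mono_tags, lifting) of_nat_diff of_nat_le_iff of_nat_mult of_nat_numeral)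
    have b1: "real D * s \<le> s * s" using Ds s0 by (intro mult_right_mono) auto
    have "12 * s \<le> s * s" using mult_right_mono[of 12 s s] s100 s0 by simp
    then have b2: "6 * s \<le> s * s / 2" by simp
    have "real D * s / 2 + 6 * real D \<le> s * s" using b1 b2 Ds by linarith
    then have "real n * (real D * s / 2 + 6 * real D) \<le> real n * (s * s)"
      by (intro mult_left_mono) auto
    then have "4 * real D * (real n * s / 8) \<le> (real n - 6 * real D) * real n"
      using ss by (simp add: algebra_simps)
    with c1r have "4 * real D * (real n * s / 8) \<le> 4 * real D * real (cert_complexity n not1 x)"
      by linarith
    then have "real n * s / 8 \<le> real (cert_complexity n not1 x)"
      using D0 by (simp add: mult_le_cancel_left_pos mult.commute)
    then show "1/8 * real n powr 1.5 \<le> real (cert_complexity n not1 x)"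
      unfolding pw by simp
  qed
  qed
  show ?thesis
  proof (rule exI[of _ "1/8::real"], rule conjI)
    show "(0::real) < 1/8" by simp
    show "\<exists>N. \<forall>n\<ge>N. \<exists>x. Hex n x = HStar \<and>
           real (cert_complexity n not0 x) \<ge> 1/8 * real n powr 1.5 \<and>
           real (cert_complexity n not1 x) \<ge> 1/8 * real n powr 1.5"
      using main by blast
  qed
qed


end
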